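(* Let $X=\{x_1,\dots,x_n\}$ be a finite $T_0$-space admitting a free action of a finite group $G$ by homeomorphisms. Then $\sum_{i=1}^{n}|U_{x_i}|$ and $\sum_{i=1}^{n}|F_{x_i}|$ are multiples of $|G|$.
   Context: For $x\in X$, $U_x$ is the intersection of all open sets containing $x$ and $F_x$ is the intersection of all closed sets containing $x$; equivalently, in the associated poset ($x\le y$ iff $U_x\subseteq U_y$), $U_x=\{y:y\le x\}$ and $F_x=\{y:y\ge x\}$. *)

theory Defs
  imports "HOL-Analysis.Analysis" "HOL-Algebra.Group_Action"
begin

text \<open>U_x: intersection of all open sets containing x; F_x: intersection of all closed sets containing x.\<close>
definition minimal_open :: "'a topology \<Rightarrow> 'a \<Rightarrow> 'a set" where
  "minimal_open X x = \<Inter>{U. openin X U \<and> x \<in> U}"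

definition minimal_closed :: "'a topology \<Rightarrow> 'a \<Rightarrow> 'a set" where
  "minimal_closed X x = \<Inter>{C. closedin X C \<and> x \<in> C}"

end

theory Submission
  imports Defs
begin

lemma hom_minimal_open:
  assumes h: "homeomorphic_map X Y f" and x: "x \<in> topspace X"
  shows "f ` minimal_open X x = minimal_open Y (f x)"
proof
  show "f ` minimal_open X x \<subseteq> minimal_open Y (f x)"
  proof (clarsimp simp: minimal_open_def)
    fix z V assume z: "\<forall>U. openin X U \<and> x \<in> U \<longrightarrow> z \<in> U" and V: "openin Y V" "f x \<in> V"
    have "openin X {w \<in> topspace X. f w \<in> V}"
      using openin_continuous_map_preimage[OF homeomorphic_imp_continuous_map[OF h] V(1)] .
    with z x V show "f z \<in> V" by auto
  qed
next
  show "minimal_open Y (f x) \<subseteq> f ` minimal_open X x"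
  proof
    fix y assume y: "y \<in> minimal_open Y (f x)"
    have fx: "f x \<in> topspace Y" using homeomorphic_imp_surjective_map[OF h] x by blast
    have "y \<in> topspace Y" using y fx unfolding minimal_open_def by blast
    then obtain z where z: "z \<in> topspace X" "y = f z"
      using homeomorphic_imp_surjective_map[OF h] by blast
    have "z \<in> minimal_open X x" unfolding minimal_open_def
    proof
      fix U assume U: "U \<in> {U. openin X U \<and> x \<in> U}"
      hence Us: "U \<subseteq> topspace X" by (auto dest: openin_subset)
      have "openin Y (f ` U)" using U homeomorphic_map_openness[OF h Us] by auto
      with U y have "f z \<in> f ` U" unfolding minimal_open_def z by auto
      then show "z \<in> U" using homeomorphic_imp_injective_map[OF h] Us z(1)
        by (auto simp: inj_on_def)
    qed
    then show "y \<in> f ` minimal_open X x" using z by auto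
  qed
qed

lemma hom_minimal_closed:
  assumes h: "homeomorphic_map X Y f" and x: "x \<in> topspace X"
  shows "f ` minimal_closed X x = minimal_closed Y (f x)"
proof
  show "f ` minimal_closed X x \<subseteq> minimal_closed Y (f x)"
  proof (clarsimp simp: minimal_closed_def)
    fix z V assume z: "\<forall>U. closedin X U \<and> x \<in> U \<longrightarrow> z \<in> U" and V: "closedin Y V" "f x \<in> V"
    have "closedin X {w \<in> topspace X. f w \<in> V}"
      using closedin_continuous_map_preimage[OF homeomorphic_imp_continuous_map[OF h] V(1)] .
    with z x V show "f z \<in> V" by auto
  qed
next
  show "minimal_closed Y (f x) \<subseteq> f ` minimal_closed X x"
  proof
    fix y assume y: "y \<in> minimal_closed Y (f x)"
    have fx: "f x \<in> topspace Y" using homeomorphic_imp_surjective_map[OF h] x by blast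
    have "y \<in> topspace Y" using y fx unfolding minimal_closed_def by blast
    then obtain z where z: "z \<in> topspace X" "y = f z"
      using homeomorphic_imp_surjective_map[OF h] by blast
    have "z \<in> minimal_closed X x" unfolding minimal_closed_def
    proof
      fix U assume U: "U \<in> {U. closedin X U \<and> x \<in> U}"
      hence Us: "U \<subseteq> topspace X" by (auto dest: closedin_subset)
      have "closedin Y (f ` U)" using U homeomorphic_map_closedness[OF h Us] by auto
      with U y have "f z \<in> f ` U" unfolding minimal_closed_def z by auto
      then show "z \<in> U" using homeomorphic_imp_injective_map[OF h] Us z(1)
        by (auto simp: inj_on_def)
    qed
    then show "y \<in> f ` minimal_closed X x" using z by auto
  qed
qed

lemma minimal_open_sub:
  "x \<in> topspace X \<Longrightarrow> minimal_open X x \<subseteq> topspace X"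
  unfolding minimal_open_def by auto

lemma minimal_closed_sub:
  "x \<in> topspace X \<Longrightarrow> minimal_closed X x \<subseteq> topspace X"
  unfolding minimal_closed_def by auto

lemma free_action_dvd:
  fixes G :: "('g, 'm) monoid_scheme" and f :: "'a \<Rightarrow> nat"
  assumes act: "group_action G E \<phi>" and fin: "finite E" and finG: "finite (carrier G)"
    and free: "\<And>g x. g \<in> carrier G \<Longrightarrow> x \<in> E \<Longrightarrow> \<phi> g x = x \<Longrightarrow> g = \<one>\<^bsub>G\<^esub>"
    and inv: "\<And>g x. g \<in> carrier G \<Longrightarrow> x \<in> E \<Longrightarrow> f (\<phi> g x) = f x"
  shows "order G dvd (\<Sum>x\<in>E. f x)"
proof -
  interpret group_action G E \<phi> by (rule act)
  have grp: "group G" using group_hom group_hom.axioms(1) by blast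
  have "(\<Sum>x\<in>E. f x) = (\<Sum>orb\<in>orbits G E \<phi>. \<Sum>x\<in>orb. f x)"
    by (rule disjoint_sum[OF fin, symmetric])
  moreover have "order G dvd (\<Sum>x\<in>orb. f x)" if orb: "orb \<in> orbits G E \<phi>" for orb
  proof -
    obtain x0 where x0: "x0 \<in> E" "orb = orbit G \<phi> x0" using orb unfolding orbits_def by auto
    have "stabilizer G \<phi> x0 = {\<one>\<^bsub>G\<^esub>}"
      using free x0(1) stabilizer_one_closed[OF x0(1)] unfolding stabilizer_def by auto
    then have c: "card orb = order G" using orbit_stabilizer_theorem[OF x0(1)] x0(2) by simp
    have "\<And>y. y \<in> orb \<Longrightarrow> f y = f x0"
      using x0 inv unfolding orbit_def by auto
    then have "(\<Sum>x\<in>orb. f x) = card orb * f x0" by simp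
    then show ?thesis using c by simp
  qed
  ultimately show ?thesis by (simp add: dvd_sum)
qed

theorem mainTheorem19:
  fixes X :: "'a topology" and G :: "('g, 'm) monoid_scheme" and \<phi> :: "'g \<Rightarrow> 'a \<Rightarrow> 'a"
  assumes "finite (topspace X)"
    and "t0_space X"
    and "group G" and "finite (carrier G)"
    and "group_action G (topspace X) \<phi>"
    and "\<And>g. g \<in> carrier G \<Longrightarrow> homeomorphic_map X X (\<phi> g)"
    and "\<And>g x. g \<in> carrier G \<Longrightarrow> x \<in> topspace X \<Longrightarrow> \<phi> g x = x \<Longrightarrow> g = \<one>\<^bsub>G\<^esub>"
  shows "order G dvd (\<Sum>x\<in>topspace X. card (minimal_open X x)) \<and>
         order G dvd (\<Sum>x\<in>topspace X. card (minimal_closed X x))"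
proof
  show "order G dvd (\<Sum>x\<in>topspace X. card (minimal_open X x))"
  proof (rule free_action_dvd[OF assms(5,1,4,7)])
    fix g x assume g: "g \<in> carrier G" and x: "x \<in> topspace X"
    have h: "homeomorphic_map X X (\<phi> g)" using assms(6) g .
    have "card (minimal_open X (\<phi> g x)) = card (\<phi> g ` minimal_open X x)"
      using hom_minimal_open[OF h x] by simp
    also have "\<dots> = card (minimal_open X x)"
      using homeomorphic_imp_injective_map[OF h] minimal_open_sub[OF x]
      by (meson card_image inj_on_subset)
    finally show "card (minimal_open X (\<phi> g x)) = card (minimal_open X x)" .
  qed
next
  show "order G dvd (\<Sum>x\<in>topspace X. card (minimal_closed X x))"
  proof (rule free_action_dvd[OF assms(5,1,4,7)])
    fix g x assume g: "g \<in> carrier G" and x: "x \<in> topspace X"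
    have h: "homeomorphic_map X X (\<phi> g)" using assms(6) g .
    have "card (minimal_closed X (\<phi> g x)) = card (\<phi> g ` minimal_closed X x)"
      using hom_minimal_closed[OF h x] by simp
    also have "\<dots> = card (minimal_closed X x)"
      using homeomorphic_imp_injective_map[OF h] minimal_closed_sub[OF x]
      by (meson card_image inj_on_subset)
    finally show "card (minimal_closed X (\<phi> g x)) = card (minimal_closed X x)" .
  qed
qed

end
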